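(* Let $\mathcal G$ be a core network with input nodes $\iota_1,\dots,\iota_n$ and output node $o$, fix $m$ with the vestigial subnetwork $\mathcal D_m$ nonempty, and let $\mathcal D_{m,1},\dots,\mathcal D_{m,n_m}$ be the subnetworks associated to the diagonal blocks of the Frobenius–König normal form of $J_{\mathcal D_m}$. Then for every $j=1,\dots,n_m$, $\mathcal D_{m,j}$ contains an $\iota_k$-simple node for some $k\in\{1,\dots,n\}$, $k\neq m$.
   Context: Node $b$ is downstream from $a$ (and $a$ upstream from $b$) if there is a directed path from $a$ to $b$ (every node is up/downstream from itself). $\mathcal G$ is a core network if every node is upstream from $o$ and downstream from at least one input node. $\mathcal G_m$ is the subnetwork of nodes downstream from $\iota_m$ and upstream from $o$; $\mathcal D_m$ consists of the nodes not downstream from $\iota_m$ with all arrows of $\mathcal G$ between them. A simple path visits each node at most once; an $\iota_ko$-simple path is a simple path from $\iota_k$ to $o$; a node is $\iota_k$-simple if it lies on some $\iota_ko$-simple path. Each node $j$ carries a function $f_j$; the partial derivatives $f_{j,x_\ell}$ (one per arrow $\ell\to j$, plus a self-coupling $f_{j,x_j}$ for every node) are independent indeterminates, and $J_{\mathcal K}=(f_{j,x_\ell})_{j,\ell\in\mathcal K}$. By Frobenius–König theory, there are permutation matrices with $P_mJ_{\mathcal D_m}Q_m$ block upper triangular with square fully indecomposable diagonal blocks $D_{m,j}$; each $D_{m,j}$ of order $k_j$ contains exactly $k_j$ self-couplings and after row/column permutation equals $J_{\mathcal D_{m,j}}$ for the set $\mathcal D_{m,j}$ of nodes indexing its rows,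 which (with all arrows between its nodes) is the associated subnetwork. *)

theory Defs
  imports Complex_Main "HOL-Library.Poly_Mapping"
begin

text \<open>A network: finite node set V, arrows E (a pair (a,b) is an arrow a -> b),
  input nodes iota 1, ..., iota n (pairwise distinct) and an output node o (not an input).\<close>

definition io_network ::
  "'a set \<Rightarrow> ('a \<times> 'a) set \<Rightarrow> nat \<Rightarrow> (nat \<Rightarrow> 'a) \<Rightarrow> 'a \<Rightarrow> bool" where
  "io_network V E n iota out \<longleftrightarrow>
     finite V \<and> E \<subseteq> V \<times> V \<and> 1 \<le> n \<and>
     iota ` {1..n} \<subseteq> V \<and> inj_on iota {1..n} \<and> out \<in> V \<and> out \<notin> iota ` {1..n}"

definition downstream :: "('a \<times> 'a) set \<Rightarrow> 'a \<Rightarrow> 'a \<Rightarrow> bool" where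
  "downstream E a b \<longleftrightarrow> (a, b) \<in> E\<^sup>*"

definition core_network ::
  "'a set \<Rightarrow> ('a \<times> 'a) set \<Rightarrow> nat \<Rightarrow> (nat \<Rightarrow> 'a) \<Rightarrow> 'a \<Rightarrow> bool" where
  "core_network V E n iota out \<longleftrightarrow>
     io_network V E n iota out \<and>
     (\<forall>v\<in>V. downstream E v out \<and> (\<exists>k\<in>{1..n}. downstream E (iota k) v))"

definition vestigial :: "'a set \<Rightarrow> ('a \<times> 'a) set \<Rightarrow> (nat \<Rightarrow> 'a) \<Rightarrow> nat \<Rightarrow> 'a set" where
  "vestigial V E iota m = {v \<in> V. \<not> downstream E (iota m) v}"

definition is_path :: "('a \<times> 'a) set \<Rightarrow> 'a list \<Rightarrow> bool" where
  "is_path E xs \<longleftrightarrow> xs \<noteq> [] \<and> (\<forall>i. Suc i < length xs \<longrightarrow> (xs ! i, xs ! Suc i) \<in> E)"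

definition simple_path :: "('a \<times> 'a) set \<Rightarrow> 'a list \<Rightarrow> bool" where
  "simple_path E xs \<longleftrightarrow> is_path E xs \<and> distinct xs"

definition input_simple :: "('a \<times> 'a) set \<Rightarrow> (nat \<Rightarrow> 'a) \<Rightarrow> 'a \<Rightarrow> nat \<Rightarrow> 'a \<Rightarrow> bool" where
  "input_simple E iota out k v \<longleftrightarrow>
     (\<exists>xs. simple_path E xs \<and> hd xs = iota k \<and> last xs = out \<and> v \<in> set xs)"

text \<open>Polynomials over the reals in the indeterminates f_{j,x_l}, indexed by pairs (j,l),
  represented as finitely supported maps from monomials to coefficients.\<close>
type_synonym 'a jpoly = "(('a \<times> 'a) \<Rightarrow>\<^sub>0 nat) \<Rightarrow>\<^sub>0 real"

definition indet :: "'a \<times> 'a \<Rightarrow> 'a jpoly" where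
  "indet v = Poly_Mapping.single (Poly_Mapping.single v 1) 1"

text \<open>J_K = (f_{j,x_l})_{j,l in K}: the entry is the indeterminate f_{j,x_l} if j = l
  (self-coupling) or there is an arrow l -> j, and 0 otherwise.\<close>
definition jacobian :: "('a \<times> 'a) set \<Rightarrow> 'a \<Rightarrow> 'a \<Rightarrow> 'a jpoly" where
  "jacobian E j l = (if j = l \<or> (l, j) \<in> E then indet (j, l) else 0)"

definition fully_indecomposable :: "('r \<Rightarrow> 'c \<Rightarrow> 'z::zero) \<Rightarrow> 'r set \<Rightarrow> 'c set \<Rightarrow> bool" where
  "fully_indecomposable M R C \<longleftrightarrow>
     finite R \<and> finite C \<and> card R = card C \<and> 1 \<le> card R \<and>
     (card R = 1 \<longrightarrow> (\<forall>r\<in>R. \<forall>c\<in>C. M r c \<noteq> 0)) \<and>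
     (\<forall>S T. S \<subseteq> R \<longrightarrow> T \<subseteq> C \<longrightarrow> S \<noteq> {} \<longrightarrow> T \<noteq> {} \<longrightarrow>
            card S + card T = card R \<longrightarrow> (\<exists>s\<in>S. \<exists>t\<in>T. M s t \<noteq> 0))"

text \<open>Frobenius--Koenig normal form of the square matrix (M r c)_{r,c in K}: permutation
  matrices P, Q with P M Q block upper triangular with p square fully indecomposable
  diagonal blocks.\<close>
definition fk_normal_form ::
  "('a \<Rightarrow> 'a \<Rightarrow> 'z::zero) \<Rightarrow> 'a set \<Rightarrow> nat \<Rightarrow> (nat \<Rightarrow> 'a set) \<Rightarrow> (nat \<Rightarrow> 'a set) \<Rightarrow> bool" where
  "fk_normal_form M K p R C \<longleftrightarrow>
     (\<Union>i<p. R i) = K \<and> (\<Union>i<p. C i) = K \<and>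
     (\<forall>i<p. \<forall>i'<p. i \<noteq> i' \<longrightarrow> R i \<inter> R i' = {} \<and> C i \<inter> C i' = {}) \<and>
     (\<forall>i<p. fully_indecomposable M (R i) (C i)) \<and>
     (\<forall>i<p. \<forall>i'<i. \<forall>r\<in>R i. \<forall>c\<in>C i'. M r c = 0)"

end

theory Submission
  imports Defs
begin

lemma is_path_succ: "is_path E xs \<longleftrightarrow> xs \<noteq> [] \<and> successively (\<lambda>x y. (x,y) \<in> E) xs"
  unfolding is_path_def successively_conv_nth by blast

lemma succ_last: "successively (\<lambda>x y. (x,y) \<in> E) xs \<Longrightarrow> x \<in> set xs \<Longrightarrow> (x, last xs) \<in> E\<^sup>*"
proof (induction xs arbitrary: x)
  case Nil then show ?case by simp
next
  case (Cons a xs)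
  show ?case
  proof (cases xs)
    case Nil then show ?thesis using Cons by simp
  next
    case (Cons b ys)
    have s: "successively (\<lambda>x y. (x,y) \<in> E) xs" "(a, b) \<in> E"
      using Cons.prems(1) Cons by auto
    have l: "(b, last xs) \<in> E\<^sup>*" using Cons.IH[of b] s(1) Cons by simp
    show ?thesis
    proof (cases "x = a")
      case True then show ?thesis using s l Cons by (simp add: converse_rtrancl_into_rtrancl)
    next
      case False then show ?thesis using Cons.IH[OF s(1)] Cons.prems Cons by simp
    qed
  qed
qed

lemma succ_hd: "successively (\<lambda>x y. (x,y) \<in> E) xs \<Longrightarrow> x \<in> set xs \<Longrightarrow> (hd xs, x) \<in> E\<^sup>*"
proof (induction xs)
  case Nil then show ?case by simp
next
  case (Cons a xs)
  show ?case
  proof (cases xs)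
    case Nil then show ?thesis using Cons by simp
  next
    case (Cons b ys)
    have s: "successively (\<lambda>x y. (x,y) \<in> E) xs" "(a, b) \<in> E"
      using Cons.prems(1) Cons by auto
    show ?thesis
    proof (cases "x = a")
      case True then show ?thesis by simp
    next
      case False
      then have "(b, x) \<in> E\<^sup>*" using Cons.IH[OF s(1)] Cons.prems Cons by simp
      then show ?thesis using s by (simp add: converse_rtrancl_into_rtrancl)
    qed
  qed
qed

lemma simple_exists:
  assumes "(a, b) \<in> E\<^sup>*"
  shows "\<exists>xs. simple_path E xs \<and> hd xs = a \<and> last xs = b"
  using assms
proof (induction rule: converse_rtrancl_induct)
  case base
  then show ?case by (rule exI[of _ "[b]"]) (simp add: simple_path_def is_path_def)
next
  case (step a y)
  then obtain xs where xs: "simple_path E xs" "hd xs = y" "last xs = b" by blast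
  show ?case
  proof (cases "a \<in> set xs")
    case True
    then obtain us ws where sp: "xs = us @ a # ws" by (meson split_list)
    have "simple_path E (a # ws)"
      using xs(1) unfolding sp simple_path_def is_path_succ
      by (auto simp: successively_append_iff)
    moreover have "last (a # ws) = b" using xs(3) sp by simp
    ultimately show ?thesis by force
  next
    case False
    have ne: "xs \<noteq> []" using xs(1) by (simp add: simple_path_def is_path_def)
    then obtain z zs where xz: "xs = z # zs" by (cases xs) auto
    have "simple_path E (a # xs)"
      using xs False step(1) unfolding simple_path_def is_path_succ xz by auto
    moreover have "last (a # xs) = b" using xs(3) ne by simp
    ultimately show ?thesis by force
  qed
qed

lemma splice:
  assumes "simple_path E xs1" "last xs1 = v" "simple_path E xs2" "hd xs2 = v"
  shows "\<exists>xs x. simple_path E xs \<and> hd xs = hd xs1 \<and> last xs = last xs2 \<and> x \<in> set xs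
     \<and> x \<in> set xs1 \<and> x \<in> set xs2 \<and> set xs \<subseteq> set xs1 \<union> set xs2"
  using assms
proof (induction xs1)
  case Nil then show ?case by (simp add: simple_path_def is_path_def)
next
  case (Cons y rest)
  show ?case
  proof (cases "y \<in> set xs2")
    case True
    then obtain us ws where sp: "xs2 = us @ y # ws" by (meson split_list)
    have "simple_path E (y # ws)"
      using Cons.prems(3) unfolding sp simple_path_def is_path_succ
      by (auto simp: successively_append_iff)
    moreover have "last (y # ws) = last xs2" using sp by simp
    moreover have "set (y # ws) \<subseteq> set (y # rest) \<union> set xs2" using sp by auto
    ultimately show ?thesis using True by force
  next
    case False
    have v2: "v \<in> set xs2" using Cons.prems(3,4)
      by (cases xs2) (auto simp: simple_path_def is_path_def)
    have rne: "rest \<noteq> []" using False v2 Cons.prems(2) by auto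
    then obtain z zs where rz: "rest = z # zs" by (cases rest) auto
    have sr: "simple_path E rest" "last rest = v" "(y, z) \<in> E" "y \<notin> set rest"
      using Cons.prems(1,2) rne unfolding simple_path_def is_path_succ rz by auto
    obtain xs x where h: "simple_path E xs" "hd xs = hd rest" "last xs = last xs2" "x \<in> set xs"
      "x \<in> set rest" "x \<in> set xs2" "set xs \<subseteq> set rest \<union> set xs2"
      using Cons.IH[OF sr(1,2) Cons.prems(3,4)] by blast
    have xne: "xs \<noteq> []" using h(1) by (simp add: simple_path_def is_path_def)
    then obtain w ws where xw: "xs = w # ws" by (cases xs) auto
    have yn: "y \<notin> set xs" using h(7) sr(4) False by auto
    have "simple_path E (y # xs)"
      using h(1,2) sr(3) yn unfolding simple_path_def is_path_succ xw rz by auto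
    moreover have "last (y # xs) = last xs2" using h(3) xne by simp
    moreover have "set (y # xs) \<subseteq> set (y # rest) \<union> set xs2" using h(7) by auto
    ultimately show ?thesis using h(4,5,6) by force
  qed
qed

lemma indet_nz: "indet v \<noteq> 0"
proof
  assume a: "indet v = 0"
  have "Poly_Mapping.lookup (indet v) (Poly_Mapping.single v (1::nat)) = (1::real)"
    unfolding indet_def by (rule lookup_single_eq)
  then show False using a by simp
qed

lemma jac_nz: "(l, j) \<in> E \<or> j = l \<Longrightarrow> jacobian E j l \<noteq> 0"
  unfolding jacobian_def by (auto simp add: indet_nz)

theorem proposition3p8:
  fixes V :: "'a set" and E :: "('a \<times> 'a) set" and n :: nat and iota :: "nat \<Rightarrow> 'a"
    and out :: 'a and m :: nat and p :: nat and R C :: "nat \<Rightarrow> 'a set"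
  assumes "core_network V E n iota out"
    and "m \<in> {1..n}"
    and "vestigial V E iota m \<noteq> {}"
    and "fk_normal_form (jacobian E) (vestigial V E iota m) p R C"
  shows "\<forall>j<p. \<exists>v\<in>R j. \<exists>k\<in>{1..n}. k \<noteq> m \<and> input_simple E iota out k v"
proof -
  define D where "D = vestigial V E iota m"
  have io: "io_network V E n iota out" and core: "\<forall>v\<in>V. downstream E v out \<and> (\<exists>k\<in>{1..n}. downstream E (iota k) v)"
    using assms(1) unfolding core_network_def by auto
  have finV: "finite V" and EV: "E \<subseteq> V \<times> V" using io unfolding io_network_def by auto
  have DV: "D \<subseteq> V" unfolding D_def vestigial_def by auto
  have finD: "finite D" using finV DV finite_subset by blast
  have fk: "(\<Union>i<p. R i) = D" "(\<Union>i<p. C i) = D"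
    "\<And>i i'. i < p \<Longrightarrow> i' < p \<Longrightarrow> i \<noteq> i' \<Longrightarrow> R i \<inter> R i' = {} \<and> C i \<inter> C i' = {}"
    "\<And>i. i < p \<Longrightarrow> fully_indecomposable (jacobian E) (R i) (C i)"
    "\<And>i i' r c. i < p \<Longrightarrow> i' < i \<Longrightarrow> r \<in> R i \<Longrightarrow> c \<in> C i' \<Longrightarrow> jacobian E r c = 0"
  proof -
    have f: "(\<Union>i<p. R i) = D \<and> (\<Union>i<p. C i) = D \<and>
     (\<forall>i<p. \<forall>i'<p. i \<noteq> i' \<longrightarrow> R i \<inter> R i' = {} \<and> C i \<inter> C i' = {}) \<and>
     (\<forall>i<p. fully_indecomposable (jacobian E) (R i) (C i)) \<and>
     (\<forall>i<p. \<forall>i'<i. \<forall>r\<in>R i. \<forall>c\<in>C i'. jacobian E r c = 0)"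
      using assms(4) unfolding fk_normal_form_def D_def .
    show "(\<Union>i<p. R i) = D" "(\<Union>i<p. C i) = D" using f by (rule conjunct1, simp)
    show "\<And>i i'. i < p \<Longrightarrow> i' < p \<Longrightarrow> i \<noteq> i' \<Longrightarrow> R i \<inter> R i' = {} \<and> C i \<inter> C i' = {}"
      using f by simp
    show "\<And>i. i < p \<Longrightarrow> fully_indecomposable (jacobian E) (R i) (C i)" using f by simp
    show "\<And>i i' r c. i < p \<Longrightarrow> i' < i \<Longrightarrow> r \<in> R i \<Longrightarrow> c \<in> C i' \<Longrightarrow> jacobian E r c = 0"
      using f by simp
  qed
  have RD: "\<And>i. i < p \<Longrightarrow> R i \<subseteq> D" and CD: "\<And>i. i < p \<Longrightarrow> C i \<subseteq> D" using fk(1,2) by auto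
  have cardRC: "\<And>i. i < p \<Longrightarrow> card (R i) = card (C i)"
    using fk(4) unfolding fully_indecomposable_def by blast
  have neR: "\<And>i. i < p \<Longrightarrow> R i \<noteq> {}"
  proof
    fix i assume "i < p" "R i = {}"
    then show False using fk(4)[of i] unfolding fully_indecomposable_def by simp
  qed
  have finR: "\<And>i. i < p \<Longrightarrow> finite (R i)" using RD finD finite_subset by blast
  have finC: "\<And>i. i < p \<Longrightarrow> finite (C i)" using CD finD finite_subset by blast
  define UR where "UR j = (\<Union>i\<in>{j..<p}. R i)" for j
  define UC where "UC j = (\<Union>i\<in>{j..<p}. C i)" for j
  have sub: "UR j \<subseteq> UC j" for j
  proof
    fix r assume "r \<in> UR j"
    then obtain i where i: "j \<le> i" "i < p" "r \<in> R i" unfolding UR_def by auto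
    then have "r \<in> D" using RD by auto
    then obtain i' where i': "i' < p" "r \<in> C i'" using fk(2) by auto
    have "\<not> i' < i" using fk(5)[OF i(2) _ i(3) i'(2)] jac_nz[of r r E] by auto
    then show "r \<in> UC j" unfolding UC_def using i i' by auto
  qed
  have cardU: "card (UR j) = card (UC j)" for j
  proof -
    have "card (UR j) = (\<Sum>i\<in>{j..<p}. card (R i))"
      unfolding UR_def
      by (rule card_UN_disjoint) (use finR fk(3) in auto)
    also have "\<dots> = (\<Sum>i\<in>{j..<p}. card (C i))" using cardRC by auto
    also have "\<dots> = card (UC j)"
      unfolding UC_def
      by (rule card_UN_disjoint[symmetric]) (use finC fk(3) in auto)
    finally show ?thesis .
  qed
  have UE: "UR j = UC j" for j
  proof (rule card_subset_eq)
    show "finite (UC j)" unfolding UC_def using finC by auto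
  qed (use sub cardU in auto)
  have RC: "R j = C j" if "j < p" for j
  proof
    show "R j \<subseteq> C j"
    proof
      fix r assume r: "r \<in> R j"
      then have "r \<in> UC j" using UE[of j] that unfolding UR_def by auto
      then obtain i' where i': "j \<le> i'" "i' < p" "r \<in> C i'" unfolding UC_def by auto
      show "r \<in> C j"
      proof (cases "i' = j")
        case False
        then have "r \<in> UR (Suc j)" using UE[of "Suc j"] i' unfolding UC_def by auto
        then obtain i where "Suc j \<le> i" "i < p" "r \<in> R i" unfolding UR_def by auto
        then show ?thesis using fk(3)[of j i] r that by auto
      qed (use i' in auto)
    qed
  next
    show "C j \<subseteq> R j"
    proof
      fix r assume r: "r \<in> C j"
      then have "r \<in> UR j" using UE[of j] that unfolding UC_def by auto
      then obtain i' where i': "j \<le> i'" "i' < p" "r \<in> R i'" unfolding UR_def by auto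
      show "r \<in> R j"
      proof (cases "i' = j")
        case False
        then have "r \<in> UC (Suc j)" using UE[of "Suc j"] i' unfolding UR_def by auto
        then obtain i where "Suc j \<le> i" "i < p" "r \<in> C i" unfolding UC_def by auto
        then show ?thesis using fk(3)[of j i] r that by auto
      qed (use i' in auto)
    qed
  qed
  have arrow: "i \<le> i'" if "(a, b) \<in> E" "i < p" "i' < p" "a \<in> R i'" "b \<in> R i" for a b i i'
  proof (rule ccontr)
    assume "\<not> i \<le> i'"
    then have "jacobian E b a = 0" using fk(5)[of i i' b a] that RC by auto
    then show False using jac_nz[of a b E] that(1) by auto
  qed
  have Dcl: "a \<in> D" if "(a, b) \<in> E\<^sup>*" "b \<in> D" for a b
    using that(1)
  proof (induction rule: converse_rtrancl_induct)
    case (step a y)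
    have "a \<in> V" using step(1) EV by auto
    moreover have "\<not> downstream E (iota m) a"
    proof
      assume "downstream E (iota m) a"
      then have "downstream E (iota m) y" using step(1) unfolding downstream_def by auto
      then show False using step(3) unfolding D_def vestigial_def by auto
    qed
    ultimately show ?case unfolding D_def vestigial_def by auto
  qed (use that(2) in auto)
  have F5: "\<exists>i. j \<le> i \<and> i < p \<and> x \<in> R i" if "(x, y) \<in> E\<^sup>*" "y \<in> R j" "j < p" for x y j
    using that(1)
  proof (induction rule: converse_rtrancl_induct)
    case base then show ?case using that by auto
  next
    case (step a z)
    then obtain i where i: "j \<le> i" "i < p" "z \<in> R i" by auto
    have "z \<in> D" using RD i by auto
    then have "a \<in> D" using Dcl[of a z] step(1) by auto
    then obtain i' where i': "i' < p" "a \<in> R i'" using fk(1) by auto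
    have "i \<le> i'" using arrow[OF step(1) i(2) i'(1) i'(2) i(3)] .
    then show ?case using i i' by (intro exI[of _ i']) auto
  qed
  have F6: "x \<in> D \<longrightarrow> (\<exists>i. i \<le> j \<and> i < p \<and> x \<in> R i)" if "(y, x) \<in> E\<^sup>*" "y \<in> R j" "j < p" for x y j
    using that(1)
  proof (induction rule: rtrancl_induct)
    case base then show ?case using that by auto
  next
    case (step z x)
    show ?case
    proof
      assume xD: "x \<in> D"
      then have "z \<in> D" using Dcl[of z x] step(2) by auto
      then obtain i where i: "i \<le> j" "i < p" "z \<in> R i" using step(3) by auto
      obtain i' where i': "i' < p" "x \<in> R i'" using fk(1) xD by auto
      have "i' \<le> i" using arrow[OF step(2) i'(1) i(2) i(3) i'(2)] .
      then show "\<exists>i. i \<le> j \<and> i < p \<and> x \<in> R i" using i i' by (intro exI[of _ i']) auto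
    qed
  qed
  show ?thesis
  proof (intro allI impI)
    fix j assume j: "j < p"
    obtain v where v: "v \<in> R j" using neR[OF j] by auto
    have vD: "v \<in> D" using v RD j by auto
    then have vV: "v \<in> V" using DV by auto
    obtain k where k: "k \<in> {1..n}" "(iota k, v) \<in> E\<^sup>*" "(v, out) \<in> E\<^sup>*"
      using core vV unfolding downstream_def by blast
    have km: "k \<noteq> m"
    proof
      assume "k = m"
      then show False using k(2) vD unfolding D_def vestigial_def downstream_def by auto
    qed
    obtain xs1 where x1: "simple_path E xs1" "hd xs1 = iota k" "last xs1 = v"
      using simple_exists[OF k(2)] by blast
    obtain xs2 where x2: "simple_path E xs2" "hd xs2 = v" "last xs2 = out"
      using simple_exists[OF k(3)] by blast
    obtain xs x where xs: "simple_path E xs" "hd xs = iota k" "last xs = out" "x \<in> set xs"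
      "x \<in> set xs1" "x \<in> set xs2"
      using splice[OF x1(1,3) x2(1,2)] x1(2) x2(3) by metis
    have up: "(x, v) \<in> E\<^sup>*" using succ_last[of E xs1 x] x1 xs(5)
      unfolding simple_path_def is_path_succ by auto
    have down: "(v, x) \<in> E\<^sup>*" using succ_hd[of E xs2 x] x2 xs(6)
      unfolding simple_path_def is_path_succ by auto
    have xD: "x \<in> D" using Dcl[OF up vD] .
    obtain i where i: "j \<le> i" "i < p" "x \<in> R i" using F5[OF up v j] by auto
    obtain i' where i': "i' \<le> j" "i' < p" "x \<in> R i'" using F6[OF down v j] xD by auto
    have "i = j" using fk(3)[of i i'] i i' by (cases "i = i'") auto
    then have "x \<in> R j" using i by simp
    moreover have "input_simple E iota out k x" unfolding input_simple_def using xs by blast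
    ultimately show "\<exists>v\<in>R j. \<exists>k\<in>{1..n}. k \<noteq> m \<and> input_simple E iota out k v"
      using k(1) km by blast
  qed
qed

end
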